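(* Consider $n$ agents over a fixed undirected connected graph with symmetric nonnegative weights $a_{ij}=a_{ji}$ ($a_{ij}>0$ iff $i,j$ are neighbors). Assume the CFP solution set $\mathbf{X}^*$ is non-empty. Let $x_i(t)\in\mathbb{R}^m$ evolve according to $$\dot x_i(t)=\sum_{j\in N_i}a_{ij}(x_j(t)-x_i(t))-\tau\Big(\big[x_i(t)-P_{X_i}(x_i(t))\big]+\nabla g_i^+(x_i(t))\Big),\quad i=1,\dots,n,$$ with $\tau>0$. Then the agents reach consensus asymptotically and there is $x^*\in\mathbf{X}^*$ with $\lim_{t\to\infty}x_i(t)=x^*$ for all $i$.
   Context: For each $i$, $g_i:\mathbb{R}^m\to\mathbb{R}$ convex continuous, $X_i\subset\mathbb{R}^m$ closed convex, $X=\bigcap_i X_i$; the CFP asks for $x$ with $g_i(x)\le0$ for all $i$ and $x\in X$, with solution set $\mathbf{X}^*$. $g_i^+=\max[g_i,0]$; $\nabla g_i^+(x)$ is a subgradient of $g_i^+$ at $x$, chosen as $0$ if $g_i(x)\le0$ and as a subgradient of $g_i$ otherwise, piecewise continuous in $x$; $P_{X_i}$ is Euclidean projection onto $X_i$. Consensus means $\|x_i(t)-x_j(t)\|\to0$ for all $i,j$. *)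

theory Defs
  imports "HOL-Analysis.Analysis"
begin

definition cfp_solutions :: "('n \<Rightarrow> 'a \<Rightarrow> real) \<Rightarrow> ('n \<Rightarrow> 'a set) \<Rightarrow> 'a set" where
  "cfp_solutions g X = {x. (\<forall>i. g i x \<le> 0) \<and> x \<in> (\<Inter>i. X i)}"

definition is_subgradient :: "('a::real_inner \<Rightarrow> real) \<Rightarrow> 'a \<Rightarrow> 'a \<Rightarrow> bool" where
  "is_subgradient f x d \<longleftrightarrow> (\<forall>y. f x + inner d (y - x) \<le> f y)"

definition subgrad_plus_selection :: "('a::real_inner \<Rightarrow> real) \<Rightarrow> ('a \<Rightarrow> 'a) \<Rightarrow> bool" where
  "subgrad_plus_selection g d \<longleftrightarrow>
     (\<forall>x. is_subgradient (\<lambda>y. max (g y) 0) x (d x)) \<and>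
     (\<forall>x. g x \<le> 0 \<longrightarrow> d x = 0) \<and>
     (\<forall>x. g x > 0 \<longrightarrow> is_subgradient g x (d x))"

definition piecewise_continuous :: "('a::topological_space \<Rightarrow> 'b::topological_space) \<Rightarrow> bool" where
  "piecewise_continuous f \<longleftrightarrow>
     (\<exists>P. finite P \<and> \<Union>P = UNIV \<and> (\<forall>S\<in>P. continuous_on S f))"

end

theory Submission
  imports Defs
begin

lemma dsq: "(f has_vector_derivative (F::'a::euclidean_space)) (at t within S) \<Longrightarrow> ((\<lambda>t. norm (f t - z)^2) has_real_derivative 2 * inner F (f t - z)) (at t within S)"
  unfolding power2_norm_eq_inner has_real_derivative_iff_has_vector_derivative has_vector_derivative_def
  apply (rule has_derivative_eq_rhs)
  apply (rule has_derivative_inner; (rule has_derivative_diff[where g'="\<lambda>_. 0"])?; simp)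
  apply (auto simp: fun_eq_iff inner_commute algebra_simps)
  done

lemma antimono_deriv:
  fixes h :: "real \<Rightarrow> real"
  assumes d: "\<And>t. t \<in> {s..u} \<Longrightarrow> (h has_real_derivative h' t) (at t within {0..})"
    and n: "\<And>t. t \<in> {s..u} \<Longrightarrow> h' t \<le> 0" and "0 \<le> s" "s \<le> u"
  shows "h u \<le> h s"
proof (rule DERIV_nonpos_imp_decreasing_open[OF \<open>s \<le> u\<close>])
  fix t assume t: "s < t" "t < u"
  then have "at t within {0..} = at t" using \<open>0 \<le> s\<close>
    by (intro at_within_interior) (auto simp: interior_real_atLeast)
  then show "\<exists>y. (h has_real_derivative y) (at t) \<and> y \<le> 0"
    using d[of t] n[of t] t by auto
next
  show "continuous_on {s..u} h"
  proof (rule continuous_on_subset)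
    show "continuous_on ({s..u}) h"
      unfolding continuous_on_eq_continuous_within
    proof
      fix t assume t: "t \<in> {s..u}"
      have "continuous (at t within {0..}) h"
        using d[OF t] by (rule DERIV_continuous)
      then show "continuous (at t within {s..u}) h"
        by (rule continuous_within_subset) (use \<open>0 \<le> s\<close> in auto)
    qed
  qed auto
qed


definition phi :: "('n::finite \<Rightarrow> 'n \<Rightarrow> real) \<Rightarrow> ('n \<Rightarrow> 'a::euclidean_space \<Rightarrow> real) \<Rightarrow> ('n \<Rightarrow> 'a set) \<Rightarrow> real \<Rightarrow> ('n \<Rightarrow> 'a) \<Rightarrow> real" where
 "phi a g X \<tau> y = (1/2)*(\<Sum>i\<in>UNIV. \<Sum>j\<in>UNIV. a i j * norm(y j - y i)^2)
    + \<tau>*(\<Sum>i\<in>UNIV. norm(y i - closest_point (X i) (y i))^2) + \<tau>*(\<Sum>i\<in>UNIV. max (g i (y i)) 0)"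

lemma lap:
  fixes p :: "'n::finite \<Rightarrow> 'a::real_inner"
  assumes "\<And>i j. a i j = a j i"
  shows "(\<Sum>i\<in>UNIV. \<Sum>j\<in>UNIV. a i j * inner (p j - p i) (p i)) = -(1/2) * (\<Sum>i\<in>UNIV. \<Sum>j\<in>UNIV. a i j * norm (p j - p i)^2)"
proof -
  let ?S = "(\<Sum>i\<in>UNIV. \<Sum>j\<in>UNIV. a i j * inner (p j - p i) (p i))"
  have "?S = (\<Sum>j\<in>UNIV. \<Sum>i\<in>UNIV. a i j * inner (p j - p i) (p i))" by (rule sum.swap)
  also have "\<dots> = (\<Sum>i\<in>UNIV. \<Sum>j\<in>UNIV. a i j * inner (p i - p j) (p j))"
    using assms by simp
  finally have 1: "?S = (\<Sum>i\<in>UNIV. \<Sum>j\<in>UNIV. a i j * inner (p i - p j) (p j))" .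
  have "2 * ?S = ?S + (\<Sum>i\<in>UNIV. \<Sum>j\<in>UNIV. a i j * inner (p i - p j) (p j))"
    using 1 by simp
  also have "\<dots> = (\<Sum>i\<in>UNIV. \<Sum>j\<in>UNIV. a i j * (inner (p j - p i) (p i) + inner (p i - p j) (p j)))"
    by (simp add: sum.distrib[symmetric] distrib_left)
  also have "\<dots> = (\<Sum>i\<in>UNIV. \<Sum>j\<in>UNIV. - (a i j * norm (p j - p i)^2))"
    by (intro sum.cong refl) (simp add: power2_norm_eq_inner inner_diff_left inner_diff_right inner_commute algebra_simps)
  finally show ?thesis by (simp add: sum_negf)
qed

lemma key_ineq:
  fixes y :: "'n::finite \<Rightarrow> 'a::euclidean_space"
  assumes a_sym: "\<And>i j. a i j = a j i"
    and a_zero: "\<And>i j. \<not> E i j \<Longrightarrow> a i j = 0"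
    and X_closed: "\<And>i. closed (X i)"
    and X_convex: "\<And>i. convex (X i)"
    and dg_sel: "\<And>i. subgrad_plus_selection (g i) (dg i)"
    and z: "z \<in> cfp_solutions g X"
    and tau_pos: "\<tau> > 0"
  shows "(\<Sum>i\<in>UNIV. 2 * inner ((\<Sum>j\<in>{j. E i j}. a i j *\<^sub>R (y j - y i))
           - \<tau> *\<^sub>R ((y i - closest_point (X i) (y i)) + dg i (y i))) (y i - z)) \<le> -2 * phi a g X \<tau> y"
proof -
  have zX: "z \<in> X i" and zg: "g i z \<le> 0" for i using z by (auto simp: cfp_solutions_def)
  have C: "(\<Sum>j\<in>{j. E i j}. a i j *\<^sub>R (y j - y i)) = (\<Sum>j\<in>UNIV. a i j *\<^sub>R (y j - y i))" for i
    by (rule sum.mono_neutral_left) (auto simp: a_zero)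
  have S: "(\<Sum>i\<in>UNIV. inner (\<Sum>j\<in>UNIV. a i j *\<^sub>R (y j - y i)) (y i - z)) = -(1/2) * (\<Sum>i\<in>UNIV. \<Sum>j\<in>UNIV. a i j * norm (y j - y i)^2)"
    using lap[of a "\<lambda>i. y i - z", OF a_sym] by (simp add: inner_sum_left)
  have R: "norm (y i - closest_point (X i) (y i))^2 \<le> inner (y i - closest_point (X i) (y i)) (y i - z)" for i
  proof -
    have ne: "X i \<noteq> {}" using zX by auto
    have "inner (y i - closest_point (X i) (y i)) (z - closest_point (X i) (y i)) \<le> 0"
      by (rule any_closest_point_dot[OF X_convex X_closed closest_point_in_set[OF X_closed ne] zX closest_point_exists(2)[OF X_closed ne]])
    moreover have "y i - z = (y i - closest_point (X i) (y i)) - (z - closest_point (X i) (y i))" by simp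
    ultimately show ?thesis
      by (simp only: power2_norm_eq_inner) (metis inner_diff_right diff_ge_0_iff_ge diff_le_eq  add_le_same_cancel1 le_diff_eq)
  qed
  have G: "max (g i (y i)) 0 \<le> inner (dg i (y i)) (y i - z)" for i
  proof -
    have "max (g i (y i)) 0 + inner (dg i (y i)) (z - y i) \<le> max (g i z) 0"
      using dg_sel[of i] unfolding subgrad_plus_selection_def is_subgradient_def by blast
    then show ?thesis using zg[of i] by (simp add: inner_diff_right max_def split: if_splits)
  qed
  have "(\<Sum>i\<in>UNIV. 2 * inner ((\<Sum>j\<in>{j. E i j}. a i j *\<^sub>R (y j - y i))
           - \<tau> *\<^sub>R ((y i - closest_point (X i) (y i)) + dg i (y i))) (y i - z))
     = 2 * (\<Sum>i\<in>UNIV. inner (\<Sum>j\<in>UNIV. a i j *\<^sub>R (y j - y i)) (y i - z))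
       - 2 * \<tau> * (\<Sum>i\<in>UNIV. inner (y i - closest_point (X i) (y i)) (y i - z))
       - 2 * \<tau> * (\<Sum>i\<in>UNIV. inner (dg i (y i)) (y i - z))"
    unfolding C by (simp add: inner_diff_left inner_add_left sum_subtractf sum.distrib sum_distrib_left algebra_simps)
  also have "\<dots> \<le> 2 * (\<Sum>i\<in>UNIV. inner (\<Sum>j\<in>UNIV. a i j *\<^sub>R (y j - y i)) (y i - z))
       - 2 * \<tau> * (\<Sum>i\<in>UNIV. norm (y i - closest_point (X i) (y i))^2)
       - 2 * \<tau> * (\<Sum>i\<in>UNIV. max (g i (y i)) 0)"
  proof -
    have "(\<Sum>i\<in>UNIV. norm (y i - closest_point (X i) (y i))^2) \<le> (\<Sum>i\<in>UNIV. inner (y i - closest_point (X i) (y i)) (y i - z))"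
      by (rule sum_mono) (rule R)
    moreover have "(\<Sum>i\<in>UNIV. max (g i (y i)) 0) \<le> (\<Sum>i\<in>UNIV. inner (dg i (y i)) (y i - z))"
      by (rule sum_mono) (rule G)
    ultimately show ?thesis using tau_pos by (smt (verit) mult_left_mono)
  qed
  also have "\<dots> = -2 * phi a g X \<tau> y"
    unfolding S phi_def by (simp add: algebra_simps)
  finally show ?thesis .
qed
lemma phi_parts:
  fixes y :: "'n::finite \<Rightarrow> 'a::euclidean_space"
  assumes a_nonneg: "\<And>i j. a i j \<ge> 0" and tau: "\<tau> > 0"
  shows phi_nn: "0 \<le> phi a g X \<tau> y"
    and phi_A: "a i j * norm(y j - y i)^2 \<le> 2 * phi a g X \<tau> y"
    and phi_B: "\<tau> * norm(y i - closest_point (X i) (y i))^2 \<le> phi a g X \<tau> y"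
    and phi_C: "\<tau> * max (g i (y i)) 0 \<le> phi a g X \<tau> y"
proof -
  let ?A = "(\<Sum>i\<in>UNIV. \<Sum>j\<in>UNIV. a i j * norm(y j - y i)^2)"
  let ?B = "(\<Sum>i\<in>UNIV. norm(y i - closest_point (X i) (y i))^2)"
  let ?C = "(\<Sum>i\<in>UNIV. max (g i (y i)) 0)"
  have A0: "0 \<le> ?A" by (intro sum_nonneg mult_nonneg_nonneg a_nonneg) auto
  have B0: "0 \<le> ?B" by (intro sum_nonneg) auto
  have C0: "0 \<le> ?C" by (intro sum_nonneg) auto
  have ph: "phi a g X \<tau> y = (1/2) * ?A + \<tau> * ?B + \<tau> * ?C" by (simp add: phi_def)
  have tB: "0 \<le> \<tau> * ?B" "0 \<le> \<tau> * ?C" using tau B0 C0 by auto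
  show "0 \<le> phi a g X \<tau> y" using A0 tB ph by linarith
  have "a i j * norm(y j - y i)^2 \<le> (\<Sum>j\<in>UNIV. a i j * norm(y j - y i)^2)"
    by (rule member_le_sum) (auto intro: mult_nonneg_nonneg a_nonneg)
  also have "\<dots> \<le> ?A"
    by (rule member_le_sum) (auto intro!: sum_nonneg mult_nonneg_nonneg a_nonneg)
  finally show "a i j * norm(y j - y i)^2 \<le> 2 * phi a g X \<tau> y" using tB ph by linarith
  have "norm(y i - closest_point (X i) (y i))^2 \<le> ?B" by (rule member_le_sum) auto
  then have "\<tau> * norm(y i - closest_point (X i) (y i))^2 \<le> \<tau> * ?B" using tau by simp
  then show "\<tau> * norm(y i - closest_point (X i) (y i))^2 \<le> phi a g X \<tau> y" using A0 tB ph by linarith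
  have "max (g i (y i)) 0 \<le> ?C" by (rule member_le_sum) auto
  then have "\<tau> * max (g i (y i)) 0 \<le> \<tau> * ?C" using tau by simp
  then show "\<tau> * max (g i (y i)) 0 \<le> phi a g X \<tau> y" using A0 tB ph by linarith
qed

theorem corollary2:
  fixes E :: "'n::finite \<Rightarrow> 'n \<Rightarrow> bool"
    and a :: "'n \<Rightarrow> 'n \<Rightarrow> real"
    and g :: "'n \<Rightarrow> 'a::euclidean_space \<Rightarrow> real"
    and X :: "'n \<Rightarrow> 'a set"
    and dg :: "'n \<Rightarrow> 'a \<Rightarrow> 'a"
    and x :: "'n \<Rightarrow> real \<Rightarrow> 'a"
    and \<tau> :: real
  assumes E_sym: "\<And>i j. E i j \<longleftrightarrow> E j i"
    and E_irrefl: "\<And>i. \<not> E i i"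
    and E_connected: "\<And>i j. E\<^sup>*\<^sup>* i j"
    and a_sym: "\<And>i j. a i j = a j i"
    and a_nonneg: "\<And>i j. a i j \<ge> 0"
    and a_pos_iff: "\<And>i j. a i j > 0 \<longleftrightarrow> E i j"
    and g_convex: "\<And>i. convex_on UNIV (g i)"
    and g_cont: "\<And>i. continuous_on UNIV (g i)"
    and X_closed: "\<And>i. closed (X i)"
    and X_convex: "\<And>i. convex (X i)"
    and dg_sel: "\<And>i. subgrad_plus_selection (g i) (dg i)"
    and dg_pc: "\<And>i. piecewise_continuous (dg i)"
    and nonempty: "cfp_solutions g X \<noteq> {}"
    and tau_pos: "\<tau> > 0"
    and ode: "\<And>i t. t \<ge> 0 \<Longrightarrow>
       (x i has_vector_derivative
          ((\<Sum>j\<in>{j. E i j}. a i j *\<^sub>R (x j t - x i t))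
           - \<tau> *\<^sub>R ((x i t - closest_point (X i) (x i t)) + dg i (x i t))))
       (at t within {0..})"
  shows "(\<forall>i j. ((\<lambda>t. norm (x i t - x j t)) \<longlongrightarrow> 0) at_top) \<and>
         (\<exists>xs\<in>cfp_solutions g X. \<forall>i. (x i \<longlongrightarrow> xs) at_top)"
proof -
  let ?S = "cfp_solutions g X"
  have a_zero: "a i j = 0" if "\<not> E i j" for i j
    using a_nonneg[of i j] a_pos_iff[of i j] that by linarith
  define F where "F i t = (\<Sum>j\<in>{j. E i j}. a i j *\<^sub>R (x j t - x i t))
           - \<tau> *\<^sub>R ((x i t - closest_point (X i) (x i t)) + dg i (x i t))" for i t
  define Phi where "Phi t = phi a g X \<tau> (\<lambda>i. x i t)" for t
  define W where "W z t = (\<Sum>i\<in>UNIV. norm (x i t - z)^2)" for z t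
  define D where "D z t = (\<Sum>i\<in>UNIV. 2 * inner (F i t) (x i t - z))" for z t
  have Wnn: "0 \<le> W z t" for z t unfolding W_def by (intro sum_nonneg) auto
  have PhiA: "a i j * norm (x j t - x i t)^2 \<le> 2 * Phi t" for i j t
    unfolding Phi_def using phi_A[where a=a and \<tau>=\<tau> and y="\<lambda>k. x k t" and i=i and j=j, OF a_nonneg tau_pos] by simp
  have PhiB: "\<tau> * norm (x i t - closest_point (X i) (x i t))^2 \<le> Phi t" for i t
    unfolding Phi_def using phi_B[where a=a and \<tau>=\<tau> and y="\<lambda>k. x k t" and i=i and X=X and g=g, OF a_nonneg tau_pos] by simp
  have PhiC: "\<tau> * max (g i (x i t)) 0 \<le> Phi t" for i t
    unfolding Phi_def using phi_C[where a=a and \<tau>=\<tau> and y="\<lambda>k. x k t" and i=i and X=X and g=g, OF a_nonneg tau_pos] by simp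
  have Phinn: "0 \<le> Phi t" for t unfolding Phi_def by (rule phi_nn[where a=a and \<tau>=\<tau>, OF a_nonneg tau_pos])
  have Wder: "(W z has_real_derivative D z t) (at t within {0..})" if "t \<ge> 0" for z t
    unfolding W_def D_def
    by (rule DERIV_sum, rule dsq) (use ode[OF that] in \<open>simp add: F_def\<close>)
  have Dle: "D z t \<le> -2 * Phi t" if "z \<in> ?S" for z t
    unfolding D_def Phi_def F_def
    by (rule key_ineq[OF a_sym a_zero X_closed X_convex dg_sel that tau_pos])
  have Wdec: "W z u \<le> W z s" if z: "z \<in> ?S" and "0 \<le> s" "s \<le> u" for z s u
  proof (rule antimono_deriv[where h = "W z" and h' = "D z"])
    show "(W z has_real_derivative D z t) (at t within {0..})" if "t \<in> {s..u}" for t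
      using Wder that \<open>0 \<le> s\<close> by auto
    show "D z t \<le> 0" if "t \<in> {s..u}" for t
      using Dle[OF z, of t] Phinn[of t] by linarith
  qed fact+
  obtain z0 where z0: "z0 \<in> ?S" using nonempty by blast
  have small: "\<exists>t\<ge>T. Phi t < \<epsilon>" if "\<epsilon> > 0" "T \<ge> 0" for \<epsilon> T
  proof (rule ccontr)
    assume "\<not> (\<exists>t\<ge>T. Phi t < \<epsilon>)"
    then have ge: "t \<ge> T \<Longrightarrow> Phi t \<ge> \<epsilon>" for t by (meson not_le)
    define u where "u = T + W z0 T / (2*\<epsilon>) + 1"
    have uT: "T \<le> u" unfolding u_def using Wnn[of z0 T] \<open>\<epsilon> > 0\<close> by simp
    have "W z0 u + 2*\<epsilon>*u \<le> W z0 T + 2*\<epsilon>*T"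
    proof (rule antimono_deriv[where h="\<lambda>t. W z0 t + 2*\<epsilon>*t" and h'="\<lambda>t. D z0 t + 2*\<epsilon>"])
      fix t assume t: "t \<in> {T..u}"
      then have "t \<ge> 0" using \<open>T \<ge> 0\<close> by auto
      show "((\<lambda>t. W z0 t + 2*\<epsilon>*t) has_real_derivative D z0 t + 2*\<epsilon>) (at t within {0..})"
        using DERIV_add[OF Wder[OF \<open>t \<ge> 0\<close>] DERIV_cmult[OF DERIV_ident, of "2*\<epsilon>"]] by simp
      show "D z0 t + 2*\<epsilon> \<le> 0" using Dle[OF z0, of t] ge[of t] t by auto
    qed (use uT \<open>T \<ge> 0\<close> in auto)
    then have "W z0 u \<le> W z0 T - 2*\<epsilon>*(u - T)" by (simp add: algebra_simps)
    also have "\<dots> = - 2 * \<epsilon>" unfolding u_def using \<open>\<epsilon> > 0\<close> by (simp add: field_simps)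
    finally show False using Wnn[of z0 u] \<open>\<epsilon> > 0\<close> by linarith
  qed
  have "\<forall>n. \<exists>t. t \<ge> real n \<and> Phi t < inverse (real (Suc n))"
    using small by (metis of_nat_0_le_iff inverse_positive_iff_positive of_nat_0_less_iff zero_less_Suc)
  then obtain ts where ts: "\<And>n. ts n \<ge> real n" "\<And>n. Phi (ts n) < inverse (real (Suc n))"
    by metis
  define K where "K = norm z0 + sqrt (W z0 0)"
  have xbound: "norm (x i t) \<le> K" if "t \<ge> 0" for i t
  proof -
    have "norm (x i t - z0)^2 \<le> W z0 t" unfolding W_def by (rule member_le_sum) auto
    also have "\<dots> \<le> W z0 0" using Wdec[OF z0, of 0 t] that by simp
    finally have "norm (x i t - z0) \<le> sqrt (W z0 0)" by (rule real_le_rsqrt)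
    then show ?thesis unfolding K_def by (metis add.commute norm_triangle_sub order_trans add_le_cancel_right)
  qed
  define yv where "yv n = (\<chi> i. x i (ts n))" for n
  have "bounded (range yv)"
    unfolding bounded_iff
  proof (intro exI ballI)
    fix v assume "v \<in> range yv"
    then obtain n where v: "v = yv n" by auto
    have "norm v \<le> (\<Sum>i\<in>UNIV. norm (x i (ts n)))"
      unfolding v yv_def norm_vec_def by (rule order_trans[OF L2_set_le_sum]) auto
    also have "\<dots> \<le> of_nat (card (UNIV :: 'n set)) * K"
      by (rule sum_bounded_above) (rule xbound, use ts(1)[of n] in \<open>auto intro: order_trans[OF of_nat_0_le_iff]\<close>)
    finally show "norm v \<le> of_nat (card (UNIV :: 'n set)) * K" .
  qed
  then obtain w r where r: "strict_mono r" and lim: "(yv \<circ> r) \<longlonglongrightarrow> w"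
    using bounded_imp_convergent_subsequence by blast
  define s where "s n = ts (r n)" for n
  have s_ge: "s n \<ge> real n" for n
    using ts(1)[of "r n"] seq_suble[OF r, of n] unfolding s_def by (meson of_nat_le_iff order_trans)
  have s0: "s n \<ge> 0" for n using s_ge[of n] by (meson of_nat_0_le_iff order_trans)
  have comp: "(\<lambda>n. x i (s n)) \<longlonglongrightarrow> w $ i" for i
    using tendsto_vec_nth[OF lim, of i] by (simp add: yv_def s_def o_def)
  have Phi_lim: "(\<lambda>n. Phi (s n)) \<longlonglongrightarrow> 0"
  proof (rule tendsto_sandwich[OF _ _ tendsto_const LIMSEQ_inverse_real_of_nat])
    show "\<forall>\<^sub>F n in sequentially. 0 \<le> Phi (s n)" using Phinn by simp
    have "Phi (s n) \<le> inverse (real (Suc n))" for n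
    proof -
      have "Phi (s n) < inverse (real (Suc (r n)))" using ts(2)[of "r n"] by (simp add: s_def)
      also have "\<dots> \<le> inverse (real (Suc n))"
        using seq_suble[OF r, of n] by (simp add: le_imp_inverse_le)
      finally show ?thesis by simp
    qed
    then show "\<forall>\<^sub>F n in sequentially. Phi (s n) \<le> inverse (real (Suc n))" by simp
  qed
  have wE: "w $ i = w $ j" if "E i j" for i j
  proof -
    have pos: "a i j > 0" using a_pos_iff that by simp
    have "a i j * norm (w $ j - w $ i)^2 \<le> 2 * 0"
    proof (rule tendsto_le[OF trivial_limit_sequentially])
      show "(\<lambda>n. 2 * Phi (s n)) \<longlonglongrightarrow> 2 * 0" by (intro tendsto_intros Phi_lim)
      show "(\<lambda>n. a i j * norm (x j (s n) - x i (s n))^2) \<longlonglongrightarrow> a i j * norm (w $ j - w $ i)^2"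
        by (intro tendsto_intros comp)
      show "\<forall>\<^sub>F n in sequentially. a i j * norm (x j (s n) - x i (s n))^2 \<le> 2 * Phi (s n)"
        using PhiA by simp
    qed
    then have "norm (w $ j - w $ i)^2 \<le> 0" using pos by (simp add: mult_le_0_iff)
    then show ?thesis by simp
  qed
  have wX: "w $ i \<in> X i" for i
  proof -
    have "z0 \<in> X i" using z0 unfolding cfp_solutions_def by blast
    then have ne: "X i \<noteq> {}" by blast
    define rr where "rr n = x i (s n) - closest_point (X i) (x i (s n))" for n
    have "(\<lambda>n. norm (rr n)^2) \<longlonglongrightarrow> 0"
    proof (rule tendsto_sandwich[OF _ _ tendsto_const])
      show "\<forall>\<^sub>F n in sequentially. 0 \<le> norm (rr n)^2" by simp
      show "\<forall>\<^sub>F n in sequentially. norm (rr n)^2 \<le> Phi (s n) / \<tau>"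
      proof (rule always_eventually, rule allI)
        fix n
        have "\<tau> * norm (rr n)^2 \<le> Phi (s n)" unfolding rr_def by (rule PhiB)
        then show "norm (rr n)^2 \<le> Phi (s n) / \<tau>" by (metis pos_le_divide_eq tau_pos mult.commute)
      qed
      show "(\<lambda>n. Phi (s n) / \<tau>) \<longlonglongrightarrow> 0" using tendsto_divide[OF Phi_lim tendsto_const, of \<tau>] tau_pos by simp
    qed
    then have "(\<lambda>n. sqrt (norm (rr n)^2)) \<longlonglongrightarrow> sqrt 0" by (rule tendsto_real_sqrt)
    then have "(\<lambda>n. norm (rr n)) \<longlonglongrightarrow> 0" by simp
    then have "rr \<longlonglongrightarrow> 0" by (simp add: tendsto_norm_zero_iff)
    then have "(\<lambda>n. x i (s n) - rr n) \<longlonglongrightarrow> w $ i - 0" by (rule tendsto_diff[OF comp])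
    then have lim: "(\<lambda>n. closest_point (X i) (x i (s n))) \<longlonglongrightarrow> w $ i" by (simp add: rr_def)
    have mem: "closest_point (X i) (x i (s n)) \<in> X i" for n
      by (rule closest_point_in_set[OF X_closed ne])
    show ?thesis by (rule closed_sequentially[OF X_closed[of i] mem lim])
  qed
  have wg: "g i (w $ i) \<le> 0" for i
  proof (rule tendsto_le[OF trivial_limit_sequentially])
    show "(\<lambda>n. Phi (s n) / \<tau>) \<longlonglongrightarrow> 0" using tendsto_divide[OF Phi_lim tendsto_const, of \<tau>] tau_pos by simp
    have "isCont (g i) (w $ i)"
      using g_cont[of i] by (simp add: continuous_on_eq_continuous_at)
    then show "(\<lambda>n. g i (x i (s n))) \<longlonglongrightarrow> g i (w $ i)"
      by (rule isCont_tendsto_compose) (rule comp)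
    show "\<forall>\<^sub>F n in sequentially. g i (x i (s n)) \<le> Phi (s n) / \<tau>"
    proof (rule always_eventually, rule allI)
      fix n
      have "\<tau> * max (g i (x i (s n))) 0 \<le> Phi (s n)"
        by (rule PhiC)
      then have "\<tau> * g i (x i (s n)) \<le> Phi (s n)" using tau_pos
        by (smt (verit) mult_left_mono max.cobounded1)
      then show "g i (x i (s n)) \<le> Phi (s n) / \<tau>" by (metis pos_le_divide_eq tau_pos mult.commute)
    qed
  qed
  have wconn: "w $ i = w $ j" if "E\<^sup>*\<^sup>* i j" for i j
    using that by (induction rule: rtranclp_induct) (auto dest: wE)
  define c where "c = w $ undefined"
  have wc: "w $ i = c" for i unfolding c_def using wconn[OF E_connected[of undefined i]] by simp
  have csol: "c \<in> ?S" unfolding cfp_solutions_def using wX wg wc by auto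
  have Wlim: "(\<lambda>n. W c (s n)) \<longlonglongrightarrow> 0"
  proof -
    have "(\<lambda>n. W c (s n)) \<longlonglongrightarrow> (\<Sum>i\<in>UNIV. norm (w $ i - c)^2)"
      unfolding W_def by (intro tendsto_intros comp)
    then show ?thesis using wc by simp
  qed
  have Wev: "\<forall>\<^sub>F t in at_top. W c t < e" if "e > 0" for e
  proof -
    have "\<forall>\<^sub>F n in sequentially. W c (s n) < e" using order_tendstoD(2)[OF Wlim that] .
    then obtain N where N: "W c (s N) < e" by (auto simp: eventually_sequentially)
    show ?thesis unfolding eventually_at_top_linorder
      by (rule exI[of _ "s N"]) (use Wdec[OF csol s0[of N]] N in \<open>auto intro: le_less_trans\<close>)
  qed
  have xlim: "(x i \<longlongrightarrow> c) at_top" for i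
    unfolding tendsto_iff
  proof (intro allI impI)
    fix e :: real assume e: "e > 0"
    have "\<forall>\<^sub>F t in at_top. W c t < e^2" using Wev[of "e^2"] e by simp
    then show "\<forall>\<^sub>F t in at_top. dist (x i t) c < e"
    proof (rule eventually_mono)
      fix t assume Wt: "W c t < e^2"
      have "norm (x i t - c)^2 \<le> W c t" unfolding W_def by (rule member_le_sum) auto
      then have "norm (x i t - c)^2 < e^2" using Wt by linarith
      then show "dist (x i t) c < e" using e by (simp add: dist_norm power_less_imp_less_base)
    qed
  qed
  show ?thesis
  proof (intro conjI allI bexI[OF _ csol])
    fix i j
    have "((\<lambda>t. x i t - x j t) \<longlongrightarrow> c - c) at_top" by (intro tendsto_intros xlim)
    then have "((\<lambda>t. norm (x i t - x j t)) \<longlongrightarrow> norm (c - c)) at_top" by (rule tendsto_norm)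
    then show "((\<lambda>t. norm (x i t - x j t)) \<longlongrightarrow> 0) at_top" by simp
  next
    fix i show "(x i \<longlongrightarrow> c) at_top" by (rule xlim)
  qed
qed


end
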